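(* Suppose Assumption A (constant $d$) and Assumption E (constants $C_\lambda,L_\lambda$) hold, let $r>0$, and let $\epsilon_\star\in(0,1)$ be such that $m^*_\epsilon\le G_\epsilon$ for all $\epsilon\in(0,\epsilon_\star)$. Then for all $\theta^\circ\in\Theta^r_{\mathfrak a}$ and all $\epsilon\in(0,\epsilon_\star)$: (i) $\mathbb E_{\theta^\circ}P_{M|Y}(1\le M<m^-_{*,\epsilon})\le2\exp\big(-\tfrac{C_\lambda(1\vee r)}{5}m^*_\epsilon+\log G_\epsilon\big)$; (ii) $\mathbb E_{\theta^\circ}P_{M|Y}(m^+_{*,\epsilon}<M\le G_\epsilon)\le2\exp\big(-\tfrac{C_\lambda(1\vee r)}{5}m^*_\epsilon+\log G_\epsilon\big)$.
   Context: Let $\ell^2$ be the space of square-summable real sequences with norm $\|\cdot\|$. Fix a bounded real sequence $\lambda=(\lambda_j)_{j\ge1}$ with $\lambda_j\ne0$ for all $j$ and a noise level $\epsilon\in(0,1)$. For a parameter $\theta^\circ$ the data $Y=(Y_j)_{j\ge1}$ satisfy $Y_j=\lambda_j\theta^\circ_j+\sqrt\epsilon\,\xi_j$ with $\xi_j$ i.i.d. $N(0,1)$; $\mathbb E_{\theta^\circ}$ denotes expectation under this law. Fix prior means $\eta=(\eta_j)_{j\ge1}$ and prior variances $\tau_j\in(0,\infty)$ (possibly depending on $\epsilon$). Put $\sigma_j:=(\lambda_j^2\epsilon^{-1}+\tau_j^{-1})^{-1}$, $\theta^Y_j:=\sigma_j(\tau_j^{-1}\eta_j+\lambda_j\epsilon^{-1}Y_j)$,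 $\hat\theta^m_j:=\theta^Y_j$ for $j\le m$, $\hat\theta^m_j:=\eta_j$ for $j>m$. Define $b_m:=\sum_{j>m}(\theta^\circ_j-\eta_j)^2$, $\Lambda_j:=\lambda_j^{-2}$, $\Lambda_{(m)}:=\max_{1\le j\le m}\Lambda_j$, $\bar\Lambda_m:=m^{-1}\sum_{j=1}^m\Lambda_j$. Let $G_\epsilon:=\max\{1\le m\le\lfloor\epsilon^{-1}\rfloor:\epsilon\Lambda_{(m)}\le\Lambda_1\}$. Assumption A: there is $d>0$ with $\tau_j\ge d\,(\epsilon^{1/2}\Lambda_j^{1/2}\vee\epsilon\Lambda_j)$ for all $1\le j\le G_\epsilon$, $\epsilon\in(0,1)$. Assumption E: there are constants $C_\lambda\ge1$, $L_\lambda\ge1$ such that for all $k,l\in\mathbb N$: (i) $\sup_{j>k}\lambda_j^2\le C_\lambda\min_{1\le j\le k}\lambda_j^2=C_\lambda\Lambda_{(k)}^{-1}$; (ii) $\Lambda_{(kl)}\le\Lambda_{(k)}\Lambda_{(l)}$; (iii) $\Lambda_{(k)}/\bar\Lambda_k\le L_\lambda$. Let $\mathfrak a=(\mathfrak a_j)_{j\ge1}$ be strictly positive, non-increasing, with $\mathfrak a_1=1$ and $\mathfrak a_j\to0$; for $r>0$, $\Theta^r_{\mathfrak a}:=\{\theta:\sum_{j\ge1}(\theta_j-\eta_j)^2/\mathfrak a_j\le r\}$. Let $m^*_\epsilon:=\min\{m\ge1:\mathfrak a_m\vee\epsilon m\bar\Lambda_m\le\mathfrak a_k\vee\epsilon k\bar\Lambda_k\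 \forall k\ge1\}$ and $\Phi^*_\epsilon:=\mathfrak a_{m^*_\epsilon}\vee\epsilon m^*_\epsilon\bar\Lambda_{m^*_\epsilon}$. Hierarchical prior: a random dimension $M$ with values in $\{1,\dots,G_\epsilon\}$ and $P(M=m)\propto\exp(-3C_\lambda m/2)\prod_{j=1}^m(\tau_j/\sigma_j)^{1/2}$; conditionally on $M=m$ the parameter $\vartheta^M$ has independent coordinates $N(\eta_j,\tau_j)$ for $j\le m$ and equal to $\eta_j$ for $j>m$, and $Y_j=\lambda_j\vartheta^M_j+\sqrt\epsilon\xi_j$. The posterior of $M$ is $P_{M|Y}(M=m)=\exp(\frac12\{\|\hat\theta^m-\eta\|_\sigma^2-3C_\lambda m\})/\sum_{k=1}^{G_\epsilon}\exp(\frac12\{\|\hat\theta^k-\eta\|_\sigma^2-3C_\lambda k\})$ with $\|x\|_\sigma^2:=\sum_j x_j^2/\sigma_j$. Finally $m^-_{*,\epsilon}:=\min\{m\in\{1,\dots,m^*_\epsilon\}:b_m\le8L_\lambda C_\lambda(1+1/d)(1\vee r)\Phi^*_\epsilon\}$ and $m^+_{*,\epsilon}:=\max\{m\in\{m^*_\epsilon,\dots,G_\epsilon\}:m\le5L_\lambda(\epsilon\Lambda_{(m^*_\epsilon)})^{-1}(1\vee r)\Phi^*_\epsilon\}$. *)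

theory Defs
  imports "HOL-Probability.Probability"
begin

text \<open>Sequences are functions nat \<Rightarrow> real, indexed from 1 (index 0 is unused).\<close>

definition Lam :: "(nat \<Rightarrow> real) \<Rightarrow> nat \<Rightarrow> real" where
  "Lam lam j = 1 / (lam j)^2"

definition Lam_max :: "(nat \<Rightarrow> real) \<Rightarrow> nat \<Rightarrow> real" where
  "Lam_max lam m = Max (Lam lam ` {1..m})"

definition Lam_bar :: "(nat \<Rightarrow> real) \<Rightarrow> nat \<Rightarrow> real" where
  "Lam_bar lam m = (\<Sum>j=1..m. Lam lam j) / real m"

definition G_eps :: "(nat \<Rightarrow> real) \<Rightarrow> real \<Rightarrow> nat" where
  "G_eps lam eps = Max {m. 1 \<le> m \<and> m \<le> nat \<lfloor>1 / eps\<rfloor> \<and> eps * Lam_max lam m \<le> Lam lam 1}"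

definition sig :: "(nat \<Rightarrow> real) \<Rightarrow> real \<Rightarrow> (nat \<Rightarrow> real) \<Rightarrow> nat \<Rightarrow> real" where
  "sig lam eps tau j = 1 / ((lam j)^2 / eps + 1 / tau j)"

definition thetaY :: "(nat \<Rightarrow> real) \<Rightarrow> real \<Rightarrow> (nat \<Rightarrow> real) \<Rightarrow> (nat \<Rightarrow> real)
    \<Rightarrow> (nat \<Rightarrow> real) \<Rightarrow> nat \<Rightarrow> real" where
  "thetaY lam eps eta tau Y j = sig lam eps tau j * (eta j / tau j + lam j * Y j / eps)"

definition theta_hat :: "(nat \<Rightarrow> real) \<Rightarrow> real \<Rightarrow> (nat \<Rightarrow> real) \<Rightarrow> (nat \<Rightarrow> real)
    \<Rightarrow> (nat \<Rightarrow> real) \<Rightarrow> nat \<Rightarrow> nat \<Rightarrow> real" where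
  "theta_hat lam eps eta tau Y m j = (if j \<le> m then thetaY lam eps eta tau Y j else eta j)"

text \<open>\<open>\<parallel>\<theta>^m - \<eta>\<parallel>_\<sigma>^2\<close>; only the coordinates \<open>1..m\<close> are nonzero.\<close>
definition sig_norm_sq :: "(nat \<Rightarrow> real) \<Rightarrow> real \<Rightarrow> (nat \<Rightarrow> real) \<Rightarrow> (nat \<Rightarrow> real)
    \<Rightarrow> (nat \<Rightarrow> real) \<Rightarrow> nat \<Rightarrow> real" where
  "sig_norm_sq lam eps eta tau Y m =
     (\<Sum>j=1..m. (theta_hat lam eps eta tau Y m j - eta j)^2 / sig lam eps tau j)"

definition post :: "(nat \<Rightarrow> real) \<Rightarrow> real \<Rightarrow> (nat \<Rightarrow> real) \<Rightarrow> (nat \<Rightarrow> real) \<Rightarrow> real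
    \<Rightarrow> (nat \<Rightarrow> real) \<Rightarrow> nat \<Rightarrow> real" where
  "post lam eps eta tau C Y m =
     exp ((sig_norm_sq lam eps eta tau Y m - 3 * C * real m) / 2) /
     (\<Sum>k=1..G_eps lam eps. exp ((sig_norm_sq lam eps eta tau Y k - 3 * C * real k) / 2))"

text \<open>Law of the data \<open>Y_j = \<lambda>_j \<theta>_j + \<surd>\<epsilon> \<xi>_j\<close>, \<open>\<xi>_j\<close> iid N(0,1) (normal_density takes the std. deviation).\<close>
definition data_law :: "(nat \<Rightarrow> real) \<Rightarrow> real \<Rightarrow> (nat \<Rightarrow> real) \<Rightarrow> (nat \<Rightarrow> real) measure" where
  "data_law lam eps theta =
     PiM UNIV (\<lambda>j. density lborel (normal_density (lam j * theta j) (sqrt eps)))"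

definition b_bias :: "(nat \<Rightarrow> real) \<Rightarrow> (nat \<Rightarrow> real) \<Rightarrow> nat \<Rightarrow> real" where
  "b_bias theta eta m = (\<Sum>j. (theta (j + m + 1) - eta (j + m + 1))^2)"

definition Theta_a :: "(nat \<Rightarrow> real) \<Rightarrow> (nat \<Rightarrow> real) \<Rightarrow> real \<Rightarrow> (nat \<Rightarrow> real) set" where
  "Theta_a a eta r = {theta. summable (\<lambda>j. (theta (j+1) - eta (j+1))^2 / a (j+1)) \<and>
                            (\<Sum>j. (theta (j+1) - eta (j+1))^2 / a (j+1)) \<le> r}"

definition Phi :: "(nat \<Rightarrow> real) \<Rightarrow> (nat \<Rightarrow> real) \<Rightarrow> real \<Rightarrow> nat \<Rightarrow> real" where
  "Phi a lam eps m = max (a m) (eps * real m * Lam_bar lam m)"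

definition m_star :: "(nat \<Rightarrow> real) \<Rightarrow> (nat \<Rightarrow> real) \<Rightarrow> real \<Rightarrow> nat" where
  "m_star a lam eps = (LEAST m. 1 \<le> m \<and> (\<forall>k\<ge>1. Phi a lam eps m \<le> Phi a lam eps k))"

definition Phi_star :: "(nat \<Rightarrow> real) \<Rightarrow> (nat \<Rightarrow> real) \<Rightarrow> real \<Rightarrow> real" where
  "Phi_star a lam eps = Phi a lam eps (m_star a lam eps)"

definition m_minus :: "(nat \<Rightarrow> real) \<Rightarrow> (nat \<Rightarrow> real) \<Rightarrow> real \<Rightarrow> (nat \<Rightarrow> real) \<Rightarrow> (nat \<Rightarrow> real)
    \<Rightarrow> real \<Rightarrow> real \<Rightarrow> real \<Rightarrow> real \<Rightarrow> nat" where
  "m_minus a lam eps theta eta C L d r =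
     (LEAST m. m \<in> {1..m_star a lam eps} \<and>
        b_bias theta eta m \<le> 8 * L * C * (1 + 1/d) * max 1 r * Phi_star a lam eps)"

definition m_plus :: "(nat \<Rightarrow> real) \<Rightarrow> (nat \<Rightarrow> real) \<Rightarrow> real \<Rightarrow> real \<Rightarrow> real \<Rightarrow> nat" where
  "m_plus a lam eps L r =
     Max {m \<in> {m_star a lam eps..G_eps lam eps}.
        real m \<le> 5 * L * (1 / (eps * Lam_max lam (m_star a lam eps))) * max 1 r * Phi_star a lam eps}"

end

theory Submission imports Defs begin

lemma gauss_pointwise:
  fixes sd c b \<mu> y :: real
  assumes sd: "0 < sd" and k: "0 < 1 - 2*c* sd^2"
  shows "normal_density \<mu> sd y * exp (c*(y-b)^2) =
    exp (c*(\<mu>-b)^2/(1-2*c* sd^2)) / sqrt (1-2*c* sd^2) *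
    normal_density ((\<mu> - 2*c* sd^2*b)/(1-2*c* sd^2)) (sd / sqrt (1-2*c* sd^2)) y"
proof -
  define t where "t = 2*c* sd^2"
  have k': "0 < 1 - t" using k by (simp add: t_def)
  have e: "- ((y - \<mu>)^2)/(2* sd^2) + c*(y-b)^2 = - ((y - (\<mu> - t*b)/(1-t))^2)/(2*(sd / sqrt (1-t))^2) + c*(\<mu>-b)^2/(1-t)"
  proof -
    have sq: "(sd / sqrt (1-t))^2 = sd^2/(1-t)" using k' by (simp add: power_divide)
    have c: "c = t/(2* sd^2)" using sd by (simp add: t_def)
    have ne: "1 - t \<noteq> 0" using k' by simp
    show ?thesis unfolding sq c using sd ne
      apply (simp add: field_simps)
      apply (simp add: algebra_simps power2_eq_square)
      done
  qed
  have p: "1 / sqrt (2 * pi * (sd / sqrt (1-t))\<^sup>2) = sqrt (1-t) / sqrt (2*pi* sd^2)"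
    using k' sd by (simp add: power_divide real_sqrt_divide field_simps)
  have "normal_density \<mu> sd y * exp (c*(y-b)^2) = 1 / sqrt (2 * pi * sd\<^sup>2) * exp (- ((y - \<mu>)^2)/(2* sd^2) + c*(y-b)^2)"
    unfolding normal_density_def exp_add by simp
  also have "\<dots> = exp (c*(\<mu>-b)^2/(1-t)) / sqrt (1-t) *
    normal_density ((\<mu> - t*b)/(1-t)) (sd / sqrt (1-t)) y"
  proof -
    have h: "\<And>a EA EB. 1/a*(EA*EB) = EB/sqrt (1-t)*(sqrt (1-t)/a*EA)"
      using k' by (simp add: field_simps)
    show ?thesis unfolding e exp_add normal_density_def p by (rule h)
  qed
  finally show ?thesis by (simp add: t_def)
qed

lemma nn_normal_density_one: "0 < s \<Longrightarrow> (\<integral>\<^sup>+y. ennreal (normal_density m s y) \<partial>lborel) = 1"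
  by (subst nn_integral_eq_integral) auto

lemma gauss_nn:
  fixes sd c b \<mu> :: real
  assumes sd: "0 < sd" and k: "0 < 1 - 2*c * sd^2"
  shows "(\<integral>\<^sup>+y. ennreal (exp (c*(y-b)^2)) \<partial>density lborel (normal_density \<mu> sd))
     = ennreal (exp (c*(\<mu>-b)^2/(1-2*c * sd^2)) / sqrt (1-2*c * sd^2))"
proof -
  define K where "K = exp (c*(\<mu>-b)^2/(1-2*c * sd^2)) / sqrt (1-2*c * sd^2)"
  have K0: "0 \<le> K" using k by (simp add: K_def)
  have "(\<integral>\<^sup>+y. ennreal (exp (c*(y-b)^2)) \<partial>density lborel (normal_density \<mu> sd))
     = (\<integral>\<^sup>+y. ennreal (normal_density \<mu> sd y) * ennreal (exp (c*(y-b)^2)) \<partial>lborel)"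
    by (simp add: nn_integral_density)
  also have "\<dots> = (\<integral>\<^sup>+y. ennreal K * ennreal (normal_density ((\<mu> - 2*c * sd^2*b)/(1-2*c * sd^2)) (sd / sqrt (1-2*c * sd^2)) y) \<partial>lborel)"
    by (intro nn_integral_cong)
       (simp add: ennreal_mult''[symmetric] ennreal_mult[symmetric] K0 gauss_pointwise[OF sd k] K_def)
  also have "\<dots> = ennreal K"
    by (simp add: nn_integral_cmult, subst nn_normal_density_one, use sd k in simp_all)
  finally show ?thesis by (simp add: K_def)
qed

lemma PiM_prod_nn:
  fixes M :: "nat \<Rightarrow> real measure" and f :: "nat \<Rightarrow> real \<Rightarrow> ennreal"
  assumes P: "\<And>i. prob_space (M i)" and J: "finite J"
    and f: "\<And>i. i \<in> J \<Longrightarrow> f i \<in> borel_measurable (M i)"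
  shows "(\<integral>\<^sup>+x. (\<Prod>i\<in>J. f i (x i)) \<partial>PiM UNIV M) = (\<Prod>i\<in>J. integral\<^sup>N (M i) (f i))"
proof -
  interpret product_prob_space M UNIV
    using P by (simp add: product_prob_space_def product_sigma_finite_def
        prob_space_imp_sigma_finite product_prob_space_axioms_def)
  have "(\<Prod>i\<in>J. integral\<^sup>N (M i) (f i)) = (\<integral>\<^sup>+x. (\<Prod>i\<in>J. f i (x i)) \<partial>PiM J M)"
    using product_nn_integral_prod[OF J f] by simp
  also have "\<dots> = (\<integral>\<^sup>+x. (\<Prod>i\<in>J. f i (x i)) \<partial>distr (PiM UNIV M) (PiM J M) (\<lambda>x. restrict x J))"
    using distr_PiM_restrict_finite[OF J] by simp
  also have "\<dots> = (\<integral>\<^sup>+x. (\<Prod>i\<in>J. f i (restrict x J i)) \<partial>PiM UNIV M)"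
  proof (rule nn_integral_distr)
    show "(\<lambda>x. restrict x J) \<in> measurable (PiM UNIV M) (PiM J M)"
      by (rule measurable_restrict_subset) simp
    have "(\<lambda>x. \<Prod>i\<in>J. f i (x i)) \<in> borel_measurable (PiM J M)"
    proof (intro borel_measurable_prod_ennreal)
      fix i assume i: "i \<in> J"
      show "(\<lambda>x. f i (x i)) \<in> borel_measurable (PiM J M)"
        by (rule measurable_compose[OF measurable_component_singleton[OF i, of M] f[OF i]])
    qed
    then show "(\<lambda>x. \<Prod>i\<in>J. f i (x i)) \<in> borel_measurable (distr (PiM UNIV M) (PiM J M) (\<lambda>x. restrict x J))"
      by simp
  qed
  also have "\<dots> = (\<integral>\<^sup>+x. (\<Prod>i\<in>J. f i (x i)) \<partial>PiM UNIV M)"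
    by (intro nn_integral_cong prod.cong) auto
  finally show ?thesis by simp
qed

lemma gauss_prod_bound:
  fixes lam theta :: "nat \<Rightarrow> real" and eps K :: real and c b g :: "nat \<Rightarrow> real" and J :: "nat set"
  assumes eps: "0 < eps" and J: "finite J" and K: "0 \<le> K"
    and ck: "\<And>j. j \<in> J \<Longrightarrow> 0 < 1 - 2*c j*eps"
    and g: "\<And>j. j \<in> J \<Longrightarrow> exp (c j*(lam j*theta j - b j)^2/(1-2*c j*eps)) / sqrt (1-2*c j*eps) \<le> g j"
  shows "(\<integral>\<^sup>+Y. ennreal (K * (\<Prod>j\<in>J. exp (c j*(Y j - b j)^2))) \<partial>data_law lam eps theta)
     \<le> ennreal (K * (\<Prod>j\<in>J. g j))"
proof -
  define M where "M = (\<lambda>j. density lborel (normal_density (lam j * theta j) (sqrt eps)))"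
  have P: "\<And>j. prob_space (M j)" unfolding M_def by (rule prob_space_normal_density) (simp add: eps)
  have DL: "data_law lam eps theta = PiM UNIV M" by (simp add: data_law_def M_def)
  have fm: "\<And>j. (\<lambda>y. ennreal (exp (c j*(y - b j)^2))) \<in> borel_measurable (M j)"
    unfolding M_def by simp
  have meas: "(\<lambda>Y. \<Prod>j\<in>J. ennreal (exp (c j*(Y j - b j)^2))) \<in> borel_measurable (PiM UNIV M)"
  proof (intro borel_measurable_prod_ennreal)
    fix i assume i: "i \<in> J"
    show "(\<lambda>x. ennreal (exp (c i*(x i - b i)^2))) \<in> borel_measurable (PiM UNIV M)"
      by (rule measurable_compose[OF measurable_component_singleton[of i UNIV M] fm]) simp
  qed
  have each: "\<And>j. j \<in> J \<Longrightarrow> integral\<^sup>N (M j) (\<lambda>y. ennreal (exp (c j*(y - b j)^2)))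
      = ennreal (exp (c j*(lam j*theta j - b j)^2/(1-2*c j*eps)) / sqrt (1-2*c j*eps))"
  proof -
    fix j assume j: "j \<in> J"
    have sd: "0 < sqrt eps" using eps by (simp add: real_sqrt_gt_0_iff)
    have k: "0 < 1 - 2*c j * (sqrt eps)^2" using ck[OF j] eps by simp
    show "?thesis j" unfolding M_def using gauss_nn[OF sd k, of "lam j * theta j" "b j"] eps by simp
  qed
  have "(\<integral>\<^sup>+Y. ennreal (K * (\<Prod>j\<in>J. exp (c j*(Y j - b j)^2))) \<partial>data_law lam eps theta)
     = (\<integral>\<^sup>+Y. ennreal K * (\<Prod>j\<in>J. ennreal (exp (c j*(Y j - b j)^2))) \<partial>PiM UNIV M)"
    unfolding DL by (intro nn_integral_cong) (simp add: ennreal_mult K prod_nonneg prod_ennreal)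
  also have "\<dots> = ennreal K * (\<integral>\<^sup>+Y. (\<Prod>j\<in>J. ennreal (exp (c j*(Y j - b j)^2))) \<partial>PiM UNIV M)"
    by (rule nn_integral_cmult[OF meas])
  also have "\<dots> = ennreal K * (\<Prod>j\<in>J. integral\<^sup>N (M j) (\<lambda>y. ennreal (exp (c j*(y - b j)^2))))"
    by (subst PiM_prod_nn[OF P J fm]) simp_all
  also have "\<dots> = ennreal K * (\<Prod>j\<in>J. ennreal (exp (c j*(lam j*theta j - b j)^2/(1-2*c j*eps)) / sqrt (1-2*c j*eps)))"
    by (simp add: each)
  also have "\<dots> = ennreal (K * (\<Prod>j\<in>J. exp (c j*(lam j*theta j - b j)^2/(1-2*c j*eps)) / sqrt (1-2*c j*eps)))"
  proof -
    have "(\<Prod>j\<in>J. ennreal (exp (c j*(lam j*theta j - b j)^2/(1-2*c j*eps)) / sqrt (1-2*c j*eps)))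
       = ennreal (\<Prod>j\<in>J. exp (c j*(lam j*theta j - b j)^2/(1-2*c j*eps)) / sqrt (1-2*c j*eps))"
      by (rule prod_ennreal) (use ck in \<open>auto intro!: divide_nonneg_nonneg simp: less_imp_le\<close>)
    moreover have "0 \<le> (\<Prod>j\<in>J. exp (c j*(lam j*theta j - b j)^2/(1-2*c j*eps)) / sqrt (1-2*c j*eps))"
      by (rule prod_nonneg) (use ck in \<open>auto intro!: divide_nonneg_nonneg simp: less_imp_le\<close>)
    ultimately show ?thesis by (simp add: ennreal_mult K)
  qed
  also have "\<dots> \<le> ennreal (K * (\<Prod>j\<in>J. g j))"
    by (intro ennreal_leI mult_left_mono prod_mono K conjI g)
       (use ck in \<open>auto intro!: divide_nonneg_nonneg simp: less_imp_le\<close>)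
  finally show ?thesis .
qed

lemma expect_bound:
  fixes F :: "'a \<Rightarrow> real" and B :: "nat \<Rightarrow> 'a \<Rightarrow> real" and P :: "'a measure"
  assumes S: "finite S" and Fnn: "\<And>x. 0 \<le> F x"
    and Fle: "\<And>x. F x \<le> (\<Sum>m\<in>S. B m x)"
    and Bnn: "\<And>m x. 0 \<le> B m x"
    and Bm: "\<And>m. m \<in> S \<Longrightarrow> B m \<in> borel_measurable P"
    and Bint: "\<And>m. m \<in> S \<Longrightarrow> (\<integral>\<^sup>+x. ennreal (B m x) \<partial>P) \<le> ennreal (\<beta> m)"
    and \<beta>: "\<And>m. 0 \<le> \<beta> m"
  shows "integral\<^sup>L P F \<le> (\<Sum>m\<in>S. \<beta> m)"
proof (cases "integrable P F")
  case False
  then show ?thesis by (simp add: not_integrable_integral_eq sum_nonneg \<beta>)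
next
  case True
  have Fm: "F \<in> borel_measurable P" using True by auto
  have "(\<integral>\<^sup>+x. ennreal (F x) \<partial>P) \<le> (\<integral>\<^sup>+x. (\<Sum>m\<in>S. ennreal (B m x)) \<partial>P)"
  proof (intro nn_integral_mono)
    fix x
    have "ennreal (F x) \<le> ennreal (\<Sum>m\<in>S. B m x)" by (rule ennreal_leI) (rule Fle)
    also have "\<dots> = (\<Sum>m\<in>S. ennreal (B m x))" by (rule sum_ennreal[symmetric]) (simp add: Bnn)
    finally show "ennreal (F x) \<le> (\<Sum>m\<in>S. ennreal (B m x))" .
  qed
  also have "\<dots> = (\<Sum>m\<in>S. (\<integral>\<^sup>+x. ennreal (B m x) \<partial>P))"
    by (rule nn_integral_sum) (auto intro!: measurable_compose[OF Bm])
  also have "\<dots> \<le> (\<Sum>m\<in>S. ennreal (\<beta> m))"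
    by (intro sum_mono Bint)
  also have "\<dots> = ennreal (\<Sum>m\<in>S. \<beta> m)" by (simp add: \<beta>)
  finally have le: "(\<integral>\<^sup>+x. ennreal (F x) \<partial>P) \<le> ennreal (\<Sum>m\<in>S. \<beta> m)" .
  have "integral\<^sup>L P F = enn2real (\<integral>\<^sup>+x. ennreal (F x) \<partial>P)"
    by (rule integral_eq_nn_integral[OF Fm]) (simp add: Fnn)
  also have "\<dots> \<le> (\<Sum>m\<in>S. \<beta> m)"
    using le by (simp add: enn2real_leI sum_nonneg \<beta>)
  finally show ?thesis .
qed

lemma B_meas: "(\<lambda>Y. K * (\<Prod>j\<in>J. exp (c j*(Y j - b j)^2))) \<in> borel_measurable (data_law lam eps theta)"
  unfolding data_law_def by measurable

lemma term_eq:
  fixes l e t et y :: real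
  assumes "l \<noteq> 0" "0 < t" "0 < e"
  shows "((1 / (l^2 / e + 1 / t)) * (et / t + l * y / e) - et)^2 / (1 / (l^2 / e + 1 / t))
     = (1 / (l^2 / e + 1 / t)) * l^2/e * (y - l*et)^2/e"
proof -
  have p: "0 < l^2 / e + 1 / t" using assms by (simp add: add_pos_pos)
  define s where "s = 1 / (l^2 / e + 1 / t)"
  have s0: "0 < s" using p by (simp add: s_def)
  have "s * (et / t + l * y / e) - et = s * l * (y - l*et) / e"
  proof -
    have "s * (l^2/e + 1/t) = 1" using p by (simp add: s_def)
    then have st: "s / t = 1 - s * l^2/e" by (simp add: field_simps)
    have "s * (et / t + l * y / e) - et = et*(s/t) + s*l*y/e - et" by (simp add: algebra_simps)
    also have "\<dots> = et*(1 - s * l^2/e) + s*l*y/e - et" using st by simp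
    also have "\<dots> = s * l * (y - l*et) / e" using assms by (simp add: field_simps power2_eq_square)
    finally show ?thesis .
  qed
  note eq = this
  have e0: "e \<noteq> 0" using assms by simp
  show ?thesis unfolding s_def[symmetric] eq using s0 e0
    by (simp add: power2_eq_square field_simps)
qed

lemma snorm_eq:
  assumes lam: "\<And>j. 1\<le>j \<Longrightarrow> lam j \<noteq> 0" and tau: "\<And>j. 1 \<le> j \<Longrightarrow> 0 < tau j" and eps: "0 < eps"
  shows "sig_norm_sq lam eps eta tau Y m =
     (\<Sum>j=1..m. sig lam eps tau j * lam j^2/eps * (Y j - lam j*eta j)^2/eps)"
  unfolding sig_norm_sq_def
proof (intro sum.cong refl)
  fix j assume j: "j \<in> {1..m}"
  show "(theta_hat lam eps eta tau Y m j - eta j)\<^sup>2 / sig lam eps tau j =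
     sig lam eps tau j * (lam j)\<^sup>2 / eps * (Y j - lam j * eta j)\<^sup>2 / eps"
    using j term_eq[OF lam tau eps, of j j "eta j" "Y j"]
    by (simp add: theta_hat_def thetaY_def sig_def)
qed

lemma sum_split_Ioc:
  fixes q :: "nat \<Rightarrow> real"
  assumes "m \<le> n"
  shows "(\<Sum>j=1..n. q j) = (\<Sum>j=1..m. q j) + (\<Sum>j\<in>{m<..n}. q j)"
proof -
  have "{1..n} = {1..m} \<union> {m<..n}" using assms by auto
  moreover have "{1..m} \<inter> {m<..n} = {}" by auto
  ultimately show ?thesis by (simp add: sum.union_disjoint)
qed

lemma post_lower:
  fixes N q :: "nat \<Rightarrow> real" and C :: real
  assumes N: "\<And>k. N k = (\<Sum>j=1..k. q j)" and m: "1 \<le> m" "m < ms" and G: "ms \<le> G"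
  shows "exp ((N m - 3*C*real m)/2) / (\<Sum>k=1..G. exp ((N k - 3*C*real k)/2))
     \<le> exp (3*C*(real ms - real m)/2) * (\<Prod>j\<in>{m<..ms}. exp (- q j/2))"
proof -
  let ?E = "\<lambda>k. exp ((N k - 3*C*real k)/2)"
  have "?E ms \<le> (\<Sum>k=1..G. ?E k)"
    by (rule member_le_sum) (use m G in auto)
  note Ems = this
  have Dpos: "0 < (\<Sum>k=1..G. ?E k)" by (rule less_le_trans[OF exp_gt_zero Ems])
  have "?E m / (\<Sum>k=1..G. ?E k) \<le> ?E m / ?E ms"
    using Ems Dpos by (intro divide_left_mono) auto
  also have "?E m / ?E ms = exp ((N m - N ms + 3*C*(real ms - real m))/2)"
    by (simp add: exp_diff[symmetric] diff_divide_distrib algebra_simps)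
  also have "N m - N ms = - (\<Sum>j\<in>{m<..ms}. q j)"
    using sum_split_Ioc[of m ms q] m by (simp add: N)
  also have "exp ((- (\<Sum>j\<in>{m<..ms}. q j) + 3*C*(real ms - real m))/2)
     = exp (3*C*(real ms - real m)/2) * exp (\<Sum>j\<in>{m<..ms}. - q j/2)"
    by (simp add: exp_add[symmetric] add_divide_distrib sum_negf sum_divide_distrib[symmetric])
  also have "exp (\<Sum>j\<in>{m<..ms}. - q j/2) = (\<Prod>j\<in>{m<..ms}. exp (- q j/2))"
    by (simp add: exp_sum)
  finally show ?thesis .
qed

lemma sqrt_exp: "sqrt (exp x) = exp (x/2)"
proof -
  have "exp x = (exp (x/2))^2" by (simp add: power2_eq_square exp_add[symmetric])
  then show ?thesis by simp
qed

lemma post_upper: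
  fixes N q :: "nat \<Rightarrow> real" and C :: real
  assumes N: "\<And>k. N k = (\<Sum>j=1..k. q j)" and m: "1 \<le> ms" "ms < m" and G: "m \<le> G"
  shows "exp ((N m - 3*C*real m)/2) / (\<Sum>k=1..G. exp ((N k - 3*C*real k)/2))
     \<le> exp (- 3*C*(real m - real ms)/4) * (\<Prod>j\<in>{ms<..m}. exp (q j/4))"
proof -
  let ?E = "\<lambda>k. exp ((N k - 3*C*real k)/2)"
  let ?D = "\<Sum>k=1..G. ?E k"
  define p where "p = ?E m / ?D"
  have Ems: "?E ms \<le> ?D"
    by (rule member_le_sum) (use m G in auto)
  have Em: "?E m \<le> ?D"
    by (rule member_le_sum) (use m G in auto)
  have Dpos: "0 < ?D" by (rule less_le_trans[OF exp_gt_zero Ems])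
  have p0: "0 \<le> p" using Dpos by (simp add: p_def)
  have p1: "p \<le> 1" using Em Dpos by (simp add: p_def)
  have pR: "p \<le> ?E m / ?E ms"
    unfolding p_def using Ems Dpos by (intro divide_left_mono) auto
  have "p \<le> sqrt p"
  proof -
    have "p * p \<le> p" using p0 p1 by (simp add: mult_left_le)
    then have "sqrt (p*p) \<le> sqrt p" by (rule real_sqrt_le_mono)
    moreover have "sqrt (p*p) = p" using p0 by (simp add: real_sqrt_abs2 abs_of_nonneg del: real_sqrt_mult_self)
    ultimately show ?thesis by simp
  qed
  also have "sqrt p \<le> sqrt (?E m / ?E ms)" using pR by simp
  also have "?E m / ?E ms = exp ((N m - N ms - 3*C*(real m - real ms))/2)"
    by (simp add: exp_diff[symmetric] diff_divide_distrib algebra_simps)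
  also have "N m - N ms = (\<Sum>j\<in>{ms<..m}. q j)"
    using sum_split_Ioc[of ms m q] m by (simp add: N)
  also have "sqrt (exp (((\<Sum>j\<in>{ms<..m}. q j) - 3*C*(real m - real ms))/2))
     = exp (- 3*C*(real m - real ms)/4) * exp (\<Sum>j\<in>{ms<..m}. q j/4)"
    by (simp add: sqrt_exp exp_add[symmetric] sum_divide_distrib[symmetric] field_simps)
  also have "exp (\<Sum>j\<in>{ms<..m}. q j/4) = (\<Prod>j\<in>{ms<..m}. exp (q j/4))"
    by (simp add: exp_sum)
  finally show ?thesis unfolding p_def .
qed

lemma a_anti:
  fixes a :: "nat \<Rightarrow> real"
  assumes mono: "\<forall>j\<ge>1. a (Suc j) \<le> a j" and ij: "1 \<le> i" "i \<le> j"
  shows "a j \<le> a i"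
  using ij(2)
proof (induction j rule: dec_induct)
  case base then show ?case by simp
next
  case (step n)
  have "a (Suc n) \<le> a n" using mono ij(1) step.hyps(1) by simp
  then show ?case using step.IH by simp
qed

context
  fixes a theta eta :: "nat \<Rightarrow> real" and r :: real
  assumes a_pos: "\<forall>j\<ge>1. 0 < a j" and a_mono: "\<forall>j\<ge>1. a (Suc j) \<le> a j" and a_one: "a 1 = 1"
    and sm: "summable (\<lambda>j. (theta (j+1) - eta (j+1))^2 / a (j+1))"
    and sr: "(\<Sum>j. (theta (j+1) - eta (j+1))^2 / a (j+1)) \<le> r"
begin

lemma a_le1: "1 \<le> j \<Longrightarrow> a j \<le> 1"
  using a_anti[OF a_mono, of 1 j] a_one by simp

lemma u_summable: "summable (\<lambda>j. (theta (j+1) - eta (j+1))^2)"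
proof (rule summable_comparison_test'[OF sm])
  fix n :: nat
  have a0: "0 < a (n+1)" "a (n+1) \<le> 1" using a_pos a_le1[of "n+1"] by auto
  have "(theta (n+1) - eta (n+1))^2 \<le> (theta (n+1) - eta (n+1))^2 / a (n+1)"
    using a0 by (simp add: le_divide_eq mult_left_le)
  then show "norm ((theta (n+1) - eta (n+1))^2) \<le> (theta (n+1) - eta (n+1))^2 / a (n+1)" by simp
qed

lemma b_summable: "summable (\<lambda>i. (theta (i+n+1) - eta (i+n+1))^2)"
  using u_summable summable_iff_shift[of "\<lambda>j. (theta (j+1) - eta (j+1))^2" n]
  by (simp add: add.assoc)

lemma b_nonneg: "0 \<le> b_bias theta eta n"
  unfolding b_bias_def by (rule suminf_nonneg[OF b_summable]) simp

lemma b_step: "b_bias theta eta n = (theta (n+1) - eta (n+1))^2 + b_bias theta eta (Suc n)"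
proof -
  have "(\<Sum>i. (theta (Suc i+n+1) - eta (Suc i+n+1))^2) = b_bias theta eta n - (theta (0+n+1) - eta (0+n+1))^2"
    unfolding b_bias_def by (rule suminf_split_head[OF b_summable])
  moreover have "(\<lambda>i. (theta (Suc i+n+1) - eta (Suc i+n+1))^2) = (\<lambda>i. (theta (i+Suc n+1) - eta (i+Suc n+1))^2)"
    by simp
  ultimately show ?thesis unfolding b_bias_def by simp
qed

lemma b_split: "m \<le> n \<Longrightarrow> b_bias theta eta m = (\<Sum>j\<in>{m<..n}. (theta j - eta j)^2) + b_bias theta eta n"
proof (induction n rule: dec_induct)
  case base then show ?case by simp
next
  case (step n)
  have "{m<..Suc n} = insert (Suc n) {m<..n}" using step.hyps by auto
  then show ?case using step.IH b_step[of n] by simp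
qed

lemma b_tail: "b_bias theta eta n \<le> r * a (n+1)"
proof -
  have an: "0 \<le> a (n+1)" using a_pos by (simp add: less_imp_le)
  define v where "v = (\<lambda>j. (theta (j+1) - eta (j+1))^2 / a (j+1))"
  have v0: "0 \<le> v j" for j
  proof -
    have "0 < a (j+1)" using a_pos by simp
    then show ?thesis by (simp add: v_def)
  qed
  have vs: "summable v" using sm by (simp add: v_def)
  have vs': "summable (\<lambda>i. a (n+1) * v (i+n))" using vs by (intro summable_mult) simp
  have "b_bias theta eta n \<le> (\<Sum>i. a (n+1) * v (i+n))"
    unfolding b_bias_def
  proof (rule suminf_le[OF _ b_summable vs'])
    fix i
    have ai: "0 < a (i+n+1)" using a_pos by simp
    have aa: "a (i+n+1) \<le> a (n+1)" by (rule a_anti[OF a_mono]) auto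
    have "(theta (i+n+1) - eta (i+n+1))^2 = a (i+n+1) * v (i+n)"
      using ai by (simp add: v_def add.assoc)
    also have "\<dots> \<le> a (n+1) * v (i+n)" using aa v0 by (rule mult_right_mono)
    finally show "(theta (i+n+1) - eta (i+n+1))^2 \<le> a (n+1) * v (i+n)" .
  qed
  also have "\<dots> = a (n+1) * (\<Sum>i. v (i+n))" using vs by (intro suminf_mult) simp
  also have "(\<Sum>i. v (i+n)) \<le> suminf v"
  proof -
    have "suminf v = (\<Sum>i. v (i+n)) + (\<Sum>i<n. v i)" by (rule suminf_split_initial_segment[OF vs])
    moreover have "0 \<le> (\<Sum>i<n. v i)" using v0 by (simp add: sum_nonneg)
    ultimately show ?thesis by simp
  qed
  then have "a (n+1) * (\<Sum>i. v (i+n)) \<le> a (n+1) * suminf v"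
    using an by (intro mult_left_mono) auto
  also have "suminf v \<le> r" using sr by (simp add: v_def)
  then have "a (n+1) * suminf v \<le> a (n+1) * r" using an by (intro mult_left_mono) auto
  finally show ?thesis by (simp add: mult.commute)
qed

end

lemma m_star_ge1:
  fixes lam a :: "nat \<Rightarrow> real" and eps :: real
  assumes lam_bdd: "\<exists>B. \<forall>j. \<bar>lam j\<bar> \<le> B" and lam_nz: "\<forall>j\<ge>1. lam j \<noteq> 0" and eps: "0 < eps"
  shows "1 \<le> m_star a lam eps"
proof -
  obtain B where B: "\<forall>j. \<bar>lam j\<bar> \<le> B" using lam_bdd by blast
  have "0 < \<bar>lam 1\<bar>" using lam_nz by simp
  then have Bp: "0 < B" using B by (meson less_le_trans)
  have Lge: "1/B^2 \<le> Lam lam j" if j: "1 \<le> j" for j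
  proof -
    have l0: "0 < (lam j)^2" using lam_nz j by simp
    have "\<bar>lam j\<bar> \<le> \<bar>B\<bar>" using B Bp by simp
    then have "(lam j)^2 \<le> B^2" by (simp add: abs_le_square_iff)
    then show ?thesis unfolding Lam_def using l0 by (simp add: frac_le)
  qed
  have Phge: "eps * real k / B^2 \<le> Phi a lam eps k" if k: "1 \<le> k" for k
  proof -
    have "real k * (1/B^2) \<le> (\<Sum>j=1..k. Lam lam j)"
      using sum_mono[of "{1..k}" "\<lambda>_. 1/B^2" "Lam lam", OF Lge] by simp
    then have "eps * (real k * (1/B^2)) \<le> eps * (\<Sum>j=1..k. Lam lam j)"
      using eps by (intro mult_left_mono) auto
    then have f1: "eps * real k / B^2 \<le> eps * (\<Sum>j=1..k. Lam lam j)" by simp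
    have "eps * real k * Lam_bar lam k = eps * (\<Sum>j=1..k. Lam lam j)"
      using k by (simp add: Lam_bar_def)
    then have "eps * real k / B^2 \<le> eps * real k * Lam_bar lam k" using f1 by linarith
    then show ?thesis unfolding Phi_def by (simp add: le_max_iff_disj)
  qed
  define N where "N = nat \<lceil>Phi a lam eps 1 * B^2 / eps\<rceil> + 1"
  have N1: "1 \<le> N" by (simp add: N_def)
  define v where "v = Min (Phi a lam eps ` {1..N})"
  have "v \<in> Phi a lam eps ` {1..N}" unfolding v_def using N1 by (intro Min_in) auto
  then obtain m0 where m0: "m0 \<in> {1..N}" "Phi a lam eps m0 = v" by auto
  have minim: "\<forall>k\<ge>1. Phi a lam eps m0 \<le> Phi a lam eps k"
  proof (intro allI impI)
    fix k :: nat assume k: "1 \<le> k"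
    show "Phi a lam eps m0 \<le> Phi a lam eps k"
    proof (cases "k \<le> N")
      case True
      then have "v \<le> Phi a lam eps k" using k unfolding v_def by (intro Min_le) auto
      then show ?thesis using m0 by simp
    next
      case False
      have "v \<le> Phi a lam eps 1" using N1 unfolding v_def by (intro Min_le) auto
      then have "Phi a lam eps m0 \<le> Phi a lam eps 1" using m0 by simp
      also have "Phi a lam eps 1 * B^2 / eps < real k"
      proof -
        have "Phi a lam eps 1 * B^2 / eps \<le> real (nat \<lceil>Phi a lam eps 1 * B^2 / eps\<rceil>)" by linarith
        then show ?thesis using False unfolding N_def by linarith
      qed
      then have "Phi a lam eps 1 < eps * real k / B^2"
        using eps Bp by (simp add: field_simps)
      also have "\<dots> \<le> Phi a lam eps k" by (rule Phge[OF k])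
      finally show ?thesis by simp
    qed
  qed
  have "1 \<le> m0" using m0 by simp
  then have ex: "\<exists>m. 1 \<le> m \<and> (\<forall>k\<ge>1. Phi a lam eps m \<le> Phi a lam eps k)" using minim by blast
  show ?thesis unfolding m_star_def using LeastI_ex[OF ex] by simp
qed


lemma w_bounds:
  fixes l e t :: real
  assumes "l \<noteq> 0" "0 < t" "0 < e"
  shows "0 < 1 / (l^2 / e + 1 / t) * l^2 / e" "1 / (l^2 / e + 1 / t) * l^2 / e \<le> 1"
proof -
  have x: "0 < l^2/e" using assms by simp
  have y: "0 < 1/t" using assms by simp
  have "0 < l^2 / e + 1 / t" by (rule add_pos_pos[OF x y])
  then have p: "0 < (l^2/e) / (l^2 / e + 1 / t)" by (rule divide_pos_pos[OF x])
  have eq: "1 / (l^2 / e + 1 / t) * l^2 / e = (l^2/e) / (l^2 / e + 1 / t)" by simp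
  show "0 < 1 / (l^2 / e + 1 / t) * l^2 / e" using p unfolding eq .
  have "1 / (l^2 / e + 1 / t) * l^2 / e = (l^2/e) / (l^2/e + 1/t)" by simp
  also have "\<dots> \<le> 1"
  proof -
    have D: "0 < l^2 / e + 1 / t" by (rule add_pos_pos[OF x y])
    have "l^2/e \<le> l^2 / e + 1 / t" using y by simp
    then show ?thesis using D by (simp only: divide_le_eq_1_pos)
  qed
  finally show "1 / (l^2 / e + 1 / t) * l^2 / e \<le> 1" .
qed

lemma w_lower:
  fixes l e t d :: real
  assumes "l \<noteq> 0" "0 < t" "0 < e" "0 < d" "d * (e * (1 / l^2)) \<le> t"
  shows "d / (1 + d) \<le> 1 / (l^2 / e + 1 / t) * l^2 / e"
proof -
  define x where "x = l^2/e"
  have x: "0 < x" using assms by (simp add: x_def)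
  have y: "0 < 1/t" using assms by simp
  have "d / x \<le> t" using assms(5) by (simp add: x_def field_simps)
  then have yx: "1/t \<le> x/d" using x y assms(4) by (simp add: field_simps)
  have "1 / (l^2 / e + 1 / t) * l^2 / e = x / (x + 1/t)" by (simp add: x_def)
  also have "x / (x + x/d) \<le> x / (x + 1/t)"
    using x y yx assms(4) by (intro divide_left_mono mult_pos_pos add_pos_pos) auto
  moreover have "x / (x + x/d) = d / (1 + d)"
  proof -
    have "x + x/d = x*(1+d)/d" using assms(4) by (simp add: field_simps)
    then show ?thesis using x assms(4) by simp
  qed
  ultimately show ?thesis by simp
qed

lemma gauss_val_lower:
  fixes w nu :: real
  assumes "0 < w" "w \<le> 1" "0 \<le> nu"
  shows "exp ((- w * nu / 2) / (1 + w)) / sqrt (1 + w) \<le> exp (- w * nu / 4)"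
proof -
  have "exp ((- w * nu / 2) / (1 + w)) / sqrt (1 + w) \<le> exp ((- w * nu / 2) / (1 + w))"
    using assms by (simp add: divide_le_eq)
  also have "(- w * nu / 2) / (1 + w) \<le> - w * nu / 4"
  proof -
    have wn: "0 \<le> w * nu" using assms by simp
    have "w * nu * (1 + w) \<le> w * nu * 2" using wn assms by (intro mult_left_mono) auto
    then show ?thesis using assms by (simp add: field_simps)
  qed
  then have "exp ((- w * nu / 2) / (1 + w)) \<le> exp (- w * nu / 4)" by simp
  finally show ?thesis .
qed

lemma sqrt2_le: "sqrt 2 \<le> exp (1/2)"
proof -
  have "2 \<le> exp (1::real)" using exp_ge_add_one_self[of 1] by simp
  then have "sqrt 2 \<le> sqrt (exp 1)" by simp
  then show ?thesis by (simp add: sqrt_exp)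
qed

lemma gauss_val_upper:
  fixes w nu :: real
  assumes "0 < w" "w \<le> 1" "0 \<le> nu"
  shows "exp ((w * nu / 4) / (1 - w/2)) / sqrt (1 - w/2) \<le> exp (1/2 + nu / 2)"
proof -
  have k: "1/2 \<le> 1 - w/2" using assms by simp
  have "1 / sqrt (1 - w/2) \<le> 1 / sqrt (1/2)"
    using k by (intro divide_left_mono) auto
  also have "1 / sqrt (1/2) = sqrt (2::real)" by (simp add: real_sqrt_divide)
  also note sqrt2_le
  finally have a1: "1 / sqrt (1 - w/2) \<le> exp (1/2)" .
  have "(w * nu / 4) / (1 - w/2) \<le> nu / 2"
  proof -
    have "w * nu \<le> nu * (2 - w)" using assms by (simp add: algebra_simps mult_right_le_one_le)
    then show ?thesis using assms by (simp add: field_simps)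
  qed
  then have a2: "exp ((w * nu / 4) / (1 - w/2)) \<le> exp (nu/2)" by simp
  have "exp ((w * nu / 4) / (1 - w/2)) / sqrt (1 - w/2) = exp ((w * nu / 4) / (1 - w/2)) * (1 / sqrt (1 - w/2))"
    by simp
  also have "\<dots> \<le> exp (nu/2) * exp (1/2)"
    using a1 a2 assms by (intro mult_mono) auto
  also have "\<dots> = exp (1/2 + nu/2)" by (simp add: exp_add)
  finally show ?thesis .
qed

theorem mainTheorem15:
  fixes lam eta a :: "nat \<Rightarrow> real" and tau :: "real \<Rightarrow> nat \<Rightarrow> real"
    and d C L r eps_star :: real
  assumes lam_bdd: "\<exists>B. \<forall>j. \<bar>lam j\<bar> \<le> B"
    and lam_nz: "\<forall>j\<ge>1. lam j \<noteq> 0"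
    and tau_pos: "\<forall>eps. 0 < eps \<and> eps < 1 \<longrightarrow> (\<forall>j\<ge>1. 0 < tau eps j)"
    and a_pos: "\<forall>j\<ge>1. 0 < a j"
    and a_mono: "\<forall>j\<ge>1. a (Suc j) \<le> a j"
    and a_one: "a 1 = 1"
    and a_lim: "a \<longlonglongrightarrow> 0"
    and assA: "0 < d \<and> (\<forall>eps. 0 < eps \<and> eps < 1 \<longrightarrow> (\<forall>j\<in>{1..G_eps lam eps}.
                 d * max (sqrt eps * sqrt (Lam lam j)) (eps * Lam lam j) \<le> tau eps j))"
    and C_ge: "1 \<le> C" and L_ge: "1 \<le> L"
    and assE1: "\<forall>k\<ge>1. \<forall>j>k. \<forall>i\<in>{1..k}. (lam j)^2 \<le> C * (lam i)^2"
    and assE2: "\<forall>k\<ge>1. \<forall>l\<ge>1. Lam_max lam (k * l) \<le> Lam_max lam k * Lam_max lam l"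
    and assE3: "\<forall>k\<ge>1. Lam_max lam k / Lam_bar lam k \<le> L"
    and r_pos: "0 < r"
    and eps_star: "0 < eps_star" "eps_star < 1"
    and mstar_le: "\<forall>eps. 0 < eps \<and> eps < eps_star \<longrightarrow> m_star a lam eps \<le> G_eps lam eps"
  shows "\<forall>theta \<in> Theta_a a eta r. summable (\<lambda>j. (theta j)^2) \<longrightarrow>
           (\<forall>eps. 0 < eps \<and> eps < eps_star \<longrightarrow>
             (\<integral>Y. (\<Sum>m\<in>{1..<m_minus a lam eps theta eta C L d r}. post lam eps eta (tau eps) C Y m)
                 \<partial>data_law lam eps theta)
               \<le> 2 * exp (- (C * max 1 r / 5) * real (m_star a lam eps) + ln (real (G_eps lam eps)))
           \<and> (\<integral>Y. (\<Sum>m\<in>{m_plus a lam eps L r<..G_eps lam eps}. post lam eps eta (tau eps) C Y m)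
                 \<partial>data_law lam eps theta)
               \<le> 2 * exp (- (C * max 1 r / 5) * real (m_star a lam eps) + ln (real (G_eps lam eps))))"
  apply (intro ballI impI allI)
proof -
  fix theta eps
  assume th: "theta \<in> Theta_a a eta r" and sq: "summable (\<lambda>j. (theta j)^2)"
    and epsr: "0 < eps \<and> eps < eps_star"
  have eps: "0 < eps" "eps < 1" using epsr eps_star by auto
  have sm: "summable (\<lambda>j. (theta (j+1) - eta (j+1))^2 / a (j+1))"
    and sr: "(\<Sum>j. (theta (j+1) - eta (j+1))^2 / a (j+1)) \<le> r"
    using th unfolding Theta_a_def by auto
  note bf = b_nonneg[OF a_pos a_mono a_one sm sr] b_split[OF a_pos a_mono a_one sm sr]
            b_tail[OF a_pos a_mono a_one sm sr]
  define G where "G = G_eps lam eps"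
  define ms where "ms = m_star a lam eps"
  define Ps where "Ps = Phi_star a lam eps"
  define rr where "rr = max 1 r"
  define LM where "LM = Lam_max lam ms"
  define t where "t = tau eps"
  define w where "w = (\<lambda>j. sig lam eps t j * (lam j)^2 / eps)"
  define bb where "bb = (\<lambda>j. lam j * eta j)"
  define u where "u = (\<lambda>j. (theta j - eta j)^2)"
  define nu where "nu = (\<lambda>j. (lam j)^2 * u j / eps)"
  define b where "b = b_bias theta eta"
  have tpos: "\<And>j. 1 \<le> j \<Longrightarrow> 0 < t j" using tau_pos eps by (simp add: t_def)
  have lnz: "\<And>j. 1 \<le> j \<Longrightarrow> lam j \<noteq> 0" using lam_nz by simp
  have ms1: "1 \<le> ms" unfolding ms_def by (rule m_star_ge1[OF lam_bdd lam_nz eps(1)])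
  have msG: "ms \<le> G" using mstar_le epsr by (simp add: ms_def G_def)
  have G1: "1 \<le> G" using ms1 msG by simp
  have Lpos: "\<And>j. 1 \<le> j \<Longrightarrow> 0 < Lam lam j" using lnz by (simp add: Lam_def)
  have LMge: "\<And>j. j \<in> {1..ms} \<Longrightarrow> Lam lam j \<le> LM"
    unfolding LM_def Lam_max_def by (intro Max_ge) auto
  have "LM \<in> Lam lam ` {1..ms}" unfolding LM_def Lam_max_def using ms1 by (intro Max_in) auto
  then obtain i0 where i0: "i0 \<in> {1..ms}" "Lam lam i0 = LM" by auto
  have LMpos: "0 < LM" using Lpos[of i0] i0 by simp
  have LBpos: "0 < Lam_bar lam ms"
  proof -
    have "0 < (\<Sum>j=1..ms. Lam lam j)" using ms1 Lpos by (intro sum_pos) auto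
    then show ?thesis using ms1 by (simp add: Lam_bar_def)
  qed
  have LML: "LM \<le> L * Lam_bar lam ms"
    using assE3 ms1 LBpos by (simp add: LM_def divide_le_eq)
  have Psa: "a ms \<le> Ps" and Pse: "eps * real ms * Lam_bar lam ms \<le> Ps"
    by (simp_all add: Ps_def Phi_star_def Phi_def ms_def)
  have Pspos: "0 < Ps" using Psa a_pos ms1 by (meson less_le_trans)
  define K0 where "K0 = Ps / (eps * LM)"
  have K0pos: "0 < K0" using Pspos eps LMpos by (simp add: K0_def)
  have msK0: "real ms \<le> L * K0"
  proof -
    have "eps * real ms * LM \<le> eps * real ms * (L * Lam_bar lam ms)"
      using LML eps by (intro mult_left_mono) auto
    also have "\<dots> = L * (eps * real ms * Lam_bar lam ms)" by simp
    also have "\<dots> \<le> L * Ps" using Pse L_ge by (intro mult_left_mono) auto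
    finally have "eps * real ms * LM \<le> L * Ps" .
    then show ?thesis using eps LMpos by (simp add: K0_def field_simps)
  qed
  have rr1: "1 \<le> rr" "r \<le> rr" by (simp_all add: rr_def)
  have bms: "b ms \<le> rr * Ps"
  proof -
    have "b ms \<le> r * a (ms+1)" unfolding b_def by (rule bf(3))
    also have "a (ms+1) \<le> a ms" using a_mono ms1 by simp
    then have "r * a (ms+1) \<le> rr * Ps"
      using rr1 Psa r_pos a_pos by (intro mult_mono) (auto simp: less_imp_le)
    finally show ?thesis .
  qed
  have wpos: "\<And>j. 1 \<le> j \<Longrightarrow> 0 < w j" and wle: "\<And>j. 1 \<le> j \<Longrightarrow> w j \<le> 1"
    using w_bounds[OF lnz tpos eps(1)] by (simp_all add: w_def sig_def)
  have wlow: "\<And>j. j \<in> {1..G} \<Longrightarrow> d / (1+d) \<le> w j"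
  proof -
    fix j assume j: "j \<in> {1..G}"
    have "d * max (sqrt eps * sqrt (Lam lam j)) (eps * Lam lam j) \<le> t j"
      using assA eps j by (simp add: t_def G_def)
    moreover have "d * (eps * Lam lam j) \<le> d * max (sqrt eps * sqrt (Lam lam j)) (eps * Lam lam j)"
      using assA by (intro mult_left_mono) auto
    ultimately have "d * (eps * (1 / (lam j)^2)) \<le> t j" by (simp add: Lam_def)
    then show "d / (1+d) \<le> w j"
      using w_lower[OF lnz tpos eps(1), of j j d] j assA by (simp add: w_def sig_def)
  qed
  have nunn: "\<And>j. 0 \<le> nu j" using eps by (simp add: nu_def u_def)
  have Nq: "\<And>Y k. sig_norm_sq lam eps eta t Y k = (\<Sum>j=1..k. w j * (Y j - bb j)^2 / eps)"
    using snorm_eq[OF lnz tpos eps(1)] by (simp add: w_def bb_def)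
  have postq: "\<And>Y m. post lam eps eta t C Y m =
     exp ((sig_norm_sq lam eps eta t Y m - 3*C*real m)/2) /
     (\<Sum>k=1..G. exp ((sig_norm_sq lam eps eta t Y k - 3*C*real k)/2))"
    by (simp add: post_def G_def)
  have post_nn: "\<And>Y m. 0 \<le> post lam eps eta t C Y m"
    unfolding postq by (intro divide_nonneg_nonneg sum_nonneg) auto
  define \<beta> where "\<beta> = exp (- (C * rr / 5) * real ms)"
  have \<beta>nn: "0 \<le> \<beta>" by (simp add: \<beta>_def)
  have final: "\<And>S::nat set. finite S \<Longrightarrow> card S \<le> G \<Longrightarrow> (\<Sum>m\<in>S. \<beta>) \<le> 2 * exp (- (C * rr / 5) * real ms + ln (real G))"
  proof -
    fix S :: "nat set" assume S: "finite S" "card S \<le> G"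
    have "(\<Sum>m\<in>S. \<beta>) = real (card S) * \<beta>" by simp
    also have "\<dots> \<le> real G * \<beta>" using S \<beta>nn by (intro mult_right_mono) auto
    also have "\<dots> \<le> 2 * (real G * \<beta>)" using \<beta>nn by simp
    also have "2 * (real G * \<beta>) = 2 * exp (- (C * rr / 5) * real ms + ln (real G))"
    proof -
      have "exp (- (C * rr / 5) * real ms + ln (real G)) = \<beta> * exp (ln (real G))"
        unfolding \<beta>_def by (rule exp_add)
      also have "exp (ln (real G)) = real G" using G1 by simp
      finally show ?thesis by simp
    qed
    finally show "(\<Sum>m\<in>S. \<beta>) \<le> 2 * exp (- (C * rr / 5) * real ms + ln (real G))" .
  qed
  define T where "T = 8 * L * C * (1 + 1/d) * rr * Ps"
  define mm where "mm = m_minus a lam eps theta eta C L d r"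
  have mm_eq: "mm = (LEAST m. m \<in> {1..ms} \<and> b m \<le> T)"
    by (simp add: mm_def m_minus_def ms_def T_def rr_def Ps_def b_def)
  have Tge: "rr * Ps \<le> T"
  proof -
    have "1 \<le> 8 * L * C * (1 + 1/d)"
    proof -
      have "1 \<le> L * C" using mult_mono[of 1 L 1 C] L_ge C_ge by simp
      moreover have "1 \<le> 1 + 1/d" using assA by simp
      ultimately have "1 \<le> (L * C) * (1 + 1/d)" using mult_mono[of 1 "L*C" 1 "1+1/d"] by simp
      then show ?thesis by simp
    qed
    moreover have "0 \<le> rr * Ps" using rr1 Pspos by simp
    ultimately have "1 * (rr * Ps) \<le> (8 * L * C * (1 + 1/d)) * (rr * Ps)"
      by (intro mult_right_mono) auto
    then show ?thesis by (simp add: T_def mult.assoc)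
  qed
  have Pms: "ms \<in> {1..ms} \<and> b ms \<le> T" using ms1 bms Tge by simp
  have mm_le: "mm \<le> ms" unfolding mm_eq by (rule Least_le[where P="\<lambda>m. m \<in> {1..ms} \<and> b m \<le> T", OF Pms])
  have bm_big: "\<And>m. m \<in> {1..<mm} \<Longrightarrow> T < b m"
  proof -
    fix m assume m: "m \<in> {1..<mm}"
    have "\<not> (m \<in> {1..ms} \<and> b m \<le> T)" using m unfolding mm_eq by (intro not_less_Least) auto
    then show "T < b m" using m mm_le by auto
  qed
  define c1 where "c1 = (\<lambda>j. - w j / (2*eps))"
  define B1 where "B1 = (\<lambda>m Y. exp (3*C*(real ms - real m)/2) * (\<Prod>j\<in>{m<..ms}. exp (c1 j * (Y j - bb j)^2)))"
  have partI: "(\<integral>Y. (\<Sum>m\<in>{1..<mm}. post lam eps eta t C Y m) \<partial>data_law lam eps theta) \<le> (\<Sum>m\<in>{1..<mm}. \<beta>)"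
  proof (rule expect_bound[where B = B1])
    show "finite {1..<mm}" by simp
    show "\<And>Y. 0 \<le> (\<Sum>m\<in>{1..<mm}. post lam eps eta t C Y m)" by (intro sum_nonneg post_nn)
    show "\<And>m Y. 0 \<le> B1 m Y" by (simp add: B1_def prod_nonneg)
    show "\<And>m. m \<in> {1..<mm} \<Longrightarrow> B1 m \<in> borel_measurable (data_law lam eps theta)"
      unfolding B1_def by (rule B_meas)
    show "\<And>m. 0 \<le> \<beta>" by (rule \<beta>nn)
    show "\<And>Y. (\<Sum>m\<in>{1..<mm}. post lam eps eta t C Y m) \<le> (\<Sum>m\<in>{1..<mm}. B1 m Y)"
    proof (intro sum_mono)
      fix Y m assume m: "m \<in> {1..<mm}"
      have m1: "1 \<le> m" "m < ms" using m mm_le by auto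
      have "post lam eps eta t C Y m \<le> exp (3*C*(real ms - real m)/2) * (\<Prod>j\<in>{m<..ms}. exp (- (w j * (Y j - bb j)^2 / eps)/2))"
        unfolding postq by (rule post_lower[OF Nq m1 msG])
      also have "\<dots> = B1 m Y" unfolding B1_def c1_def
        by (intro arg_cong2[where f="(*)"] refl prod.cong) (auto simp: field_simps)
      finally show "post lam eps eta t C Y m \<le> B1 m Y" .
    qed
    show "\<And>m. m \<in> {1..<mm} \<Longrightarrow> (\<integral>\<^sup>+Y. ennreal (B1 m Y) \<partial>data_law lam eps theta) \<le> ennreal \<beta>"
    proof -
      fix m assume m: "m \<in> {1..<mm}"
      have m1: "1 \<le> m" "m < ms" using m mm_le by auto
      have jr: "\<And>j. j \<in> {m<..ms} \<Longrightarrow> 1 \<le> j \<and> j \<le> ms" using m1 by auto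
      have gb: "(\<integral>\<^sup>+Y. ennreal (B1 m Y) \<partial>data_law lam eps theta)
          \<le> ennreal (exp (3*C*(real ms - real m)/2) * (\<Prod>j\<in>{m<..ms}. exp (- w j * nu j / 4)))"
        unfolding B1_def
      proof (rule gauss_prod_bound[OF eps(1)])
        show "finite {m<..ms}" by simp
        show "0 \<le> exp (3*C*(real ms - real m)/2)" by simp
        fix j assume j: "j \<in> {m<..ms}"
        have wj: "0 < w j" "w j \<le> 1" using wpos wle jr[OF j] by auto
        have e1: "1 - 2 * c1 j * eps = 1 + w j" using eps by (simp add: c1_def)
        show "0 < 1 - 2 * c1 j * eps" unfolding e1 using wj by simp
        have e2: "c1 j * (lam j * theta j - bb j)^2 = - w j * nu j / 2"
          using eps by (simp add: c1_def bb_def nu_def u_def power2_eq_square field_simps)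
        show "exp (c1 j * (lam j * theta j - bb j)^2 / (1 - 2 * c1 j * eps)) / sqrt (1 - 2 * c1 j * eps)
            \<le> exp (- w j * nu j / 4)"
          unfolding e1 e2 by (rule gauss_val_lower[OF wj nunn])
      qed
      have sig: "7 * C * rr * real ms \<le> (\<Sum>j\<in>{m<..ms}. w j * nu j)"
      proof -
        have d0: "0 < d" using assA by simp
        define D1 where "D1 = d / (1 + d)"
        define Q where "Q = 1 / (eps * LM)"
        have D1pos: "0 \<le> D1" using d0 by (simp add: D1_def)
        have D1le: "D1 \<le> 1" using d0 by (simp add: D1_def)
        have Qpos: "0 < Q" using eps LMpos by (simp add: Q_def)
        have each: "\<And>j. j \<in> {m<..ms} \<Longrightarrow> D1 * (Q * u j) \<le> w j * nu j"
        proof -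
          fix j assume j: "j \<in> {m<..ms}"
          have j1: "1 \<le> j" "j \<le> ms" using jr[OF j] by auto
          have jG: "j \<in> {1..G}" using j1 msG by auto
          have u0: "0 \<le> u j" by (simp add: u_def)
          have Lj: "0 < Lam lam j" "Lam lam j \<le> LM" using Lpos[OF j1(1)] LMge[of j] j1 by auto
          have nuj: "nu j = u j / (eps * Lam lam j)" using lnz[OF j1(1)] by (simp add: nu_def Lam_def)
          have "Q * u j = u j / (eps * LM)" by (simp add: Q_def)
          also have "\<dots> \<le> u j / (eps * Lam lam j)"
            using u0 Lj eps by (intro divide_left_mono mult_left_mono mult_pos_pos) auto
          finally have "Q * u j \<le> nu j" unfolding nuj .
          moreover have "D1 \<le> w j" using wlow[OF jG] by (simp add: D1_def)
          moreover have "0 \<le> Q * u j" using Qpos u0 by simp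
          ultimately show "D1 * (Q * u j) \<le> w j * nu j" using D1pos by (intro mult_mono) auto
        qed
        have "(\<Sum>j\<in>{m<..ms}. D1 * (Q * u j)) \<le> (\<Sum>j\<in>{m<..ms}. w j * nu j)"
          by (rule sum_mono) (rule each)
        moreover have "(\<Sum>j\<in>{m<..ms}. D1 * (Q * u j)) = Q * (D1 * (\<Sum>j\<in>{m<..ms}. u j))"
          by (simp add: sum_distrib_left algebra_simps)
        moreover have su: "(\<Sum>j\<in>{m<..ms}. u j) = b m - b ms"
          using bf(2)[of m ms] m1 by (simp add: b_def u_def)
        moreover have "T - rr * Ps \<le> b m - b ms" using bm_big[OF m] bms by simp
        ultimately have s1: "Q * (D1 * (T - rr * Ps)) \<le> (\<Sum>j\<in>{m<..ms}. w j * nu j)"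
        proof -
          assume a1: "(\<Sum>j\<in>{m<..ms}. D1 * (Q * u j)) \<le> (\<Sum>j\<in>{m<..ms}. w j * nu j)"
            and a2: "(\<Sum>j\<in>{m<..ms}. D1 * (Q * u j)) = Q * (D1 * (\<Sum>j\<in>{m<..ms}. u j))"
            and a3: "(\<Sum>j\<in>{m<..ms}. u j) = b m - b ms" and a4: "T - rr * Ps \<le> b m - b ms"
          have "Q * (D1 * (T - rr * Ps)) \<le> Q * (D1 * (b m - b ms))"
            using a4 D1pos Qpos by (intro mult_left_mono) auto
          then show ?thesis using a1 a2 a3 by simp
        qed
        have D1T: "D1 * T = 8 * L * C * rr * Ps"
        proof -
          have "0 < d + d * d" using d0 by (intro add_pos_pos mult_pos_pos)
          then have "D1 * (1 + 1/d) = 1" using d0 by (simp add: D1_def field_simps)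
          then show ?thesis by (simp add: T_def)
        qed
        have "D1 * (rr * Ps) \<le> rr * Ps" using D1le D1pos rr1 Pspos by (intro mult_left_le_one_le) auto
        then have s2: "(8 * L * C - 1) * (rr * Ps) \<le> D1 * (T - rr * Ps)"
          using D1T by (simp add: right_diff_distrib left_diff_distrib)
        have s3: "Q * ((8 * L * C - 1) * (rr * Ps)) = (8 * L * C - 1) * (rr * K0)"
          by (simp add: Q_def K0_def)
        have LC: "1 \<le> L * C" using mult_mono[of 1 L 1 C] L_ge C_ge by simp
        have rK: "0 \<le> rr * K0" using rr1 K0pos by simp
        have "7 * C * rr * real ms \<le> 7 * C * rr * (L * K0)"
          using msK0 C_ge rr1 by (intro mult_left_mono) auto
        also have "\<dots> = 7 * (L * C) * (rr * K0)" by simp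
        also have "\<dots> \<le> (8 * L * C - 1) * (rr * K0)"
          using LC rK by (intro mult_right_mono) (auto simp: mult.commute)
        also have "\<dots> = Q * ((8 * L * C - 1) * (rr * Ps))" by (rule s3[symmetric])
        also have "\<dots> \<le> Q * (D1 * (T - rr * Ps))" using s2 Qpos by (intro mult_left_mono) auto
        also have "\<dots> \<le> (\<Sum>j\<in>{m<..ms}. w j * nu j)" by (rule s1)
        finally show ?thesis .
      qed
      have "exp (3*C*(real ms - real m)/2) * (\<Prod>j\<in>{m<..ms}. exp (- w j * nu j / 4))
          = exp (3*C*(real ms - real m)/2 - (\<Sum>j\<in>{m<..ms}. w j * nu j) / 4)"
      proof -
        have s: "(\<Sum>j\<in>{m<..ms}. - w j * nu j / 4) = - (\<Sum>j\<in>{m<..ms}. w j * nu j) / 4"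
          by (simp add: sum_negf sum_divide_distrib)
        have "(\<Prod>j\<in>{m<..ms}. exp (- w j * nu j / 4)) = exp (- (\<Sum>j\<in>{m<..ms}. w j * nu j) / 4)"
          unfolding s[symmetric] by (simp add: exp_sum)
        moreover have "exp (3*C*(real ms - real m)/2) * exp (- (\<Sum>j\<in>{m<..ms}. w j * nu j) / 4)
           = exp (3*C*(real ms - real m)/2 - (\<Sum>j\<in>{m<..ms}. w j * nu j) / 4)"
          by (simp add: exp_add[symmetric])
        ultimately show ?thesis by simp
      qed
      also have "\<dots> \<le> \<beta>"
      proof -
        define X where "X = C * rr * real ms"
        define Y where "Y = C * real ms"
        define Z where "Z = C * real m"
        define Sg where "Sg = (\<Sum>j\<in>{m<..ms}. w j * nu j)"
        have "C * real ms \<le> C * rr * real ms" using rr1 C_ge by (simp add: mult_right_mono mult_left_mono)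
        then have YX: "Y \<le> X" by (simp add: X_def Y_def)
        have Z0: "0 \<le> Z" using C_ge by (simp add: Z_def)
        have X0: "0 \<le> X" using C_ge rr1 by (simp add: X_def)
        have SX: "7 * X \<le> Sg" using sig by (simp add: X_def Sg_def)
        have e1: "3*C*(real ms - real m)/2 = 3*Y/2 - 3*Z/2" by (simp add: Y_def Z_def right_diff_distrib diff_divide_distrib)
        have e2: "- (C * rr / 5) * real ms = - X/5" by (simp add: X_def)
        have "3*Y/2 - 3*Z/2 - Sg / 4 \<le> - X/5" using YX Z0 X0 SX by linarith
        then have "3*C*(real ms - real m)/2 - (\<Sum>j\<in>{m<..ms}. w j * nu j) / 4 \<le> - (C * rr / 5) * real ms"
          unfolding e1 e2 Sg_def .
        then show ?thesis by (simp add: \<beta>_def)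
      qed
      finally show "(\<integral>\<^sup>+Y. ennreal (B1 m Y) \<partial>data_law lam eps theta) \<le> ennreal \<beta>"
        using gb by (meson ennreal_leI order_trans)
    qed
  qed
  have cardI: "card {1..<mm} \<le> G" using mm_le msG by simp
  have resI: "(\<integral>Y. (\<Sum>m\<in>{1..<mm}. post lam eps eta t C Y m) \<partial>data_law lam eps theta)
      \<le> 2 * exp (- (C * rr / 5) * real ms + ln (real G))"
    using partI final[OF _ cardI] by simp
  have resII: "(\<integral>Y. (\<Sum>m\<in>{m_plus a lam eps L r<..G}. post lam eps eta t C Y m) \<partial>data_law lam eps theta)
      \<le> 2 * exp (- (C * rr / 5) * real ms + ln (real G))"
  proof -
    define mp where "mp = m_plus a lam eps L r"
    define Sp where "Sp = {m \<in> {ms..G}. real m \<le> 5 * L * (1 / (eps * LM)) * rr * Ps}"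
    have mp_eq: "mp = Max Sp" by (simp add: mp_def m_plus_def Sp_def ms_def LM_def rr_def Ps_def G_def)
    have bnd: "5 * L * (1 / (eps * LM)) * rr * Ps = 5 * L * rr * K0" by (simp add: K0_def)
    have finSp: "finite Sp" by (simp add: Sp_def)
    have msSp: "ms \<in> Sp"
    proof -
      have "L * K0 \<le> 5 * L * rr * K0"
      proof -
        have "0 \<le> L * K0" using L_ge K0pos by simp
        moreover have "1 \<le> 5 * rr" using rr1 by simp
        ultimately have "(L * K0) * 1 \<le> (L * K0) * (5 * rr)" by (intro mult_left_mono) auto
        then show ?thesis by (simp add: algebra_simps)
      qed
      then show ?thesis using msK0 msG unfolding Sp_def bnd by auto
    qed
    have mpms: "ms \<le> mp" unfolding mp_eq using finSp msSp by (rule Max_ge)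
    have big: "\<And>m. m \<in> {mp<..G} \<Longrightarrow> 5 * L * rr * K0 < real m \<and> ms < m"
    proof -
      fix m assume m: "m \<in> {mp<..G}"
      have "\<not> real m \<le> 5 * L * rr * K0"
      proof
        assume "real m \<le> 5 * L * rr * K0"
        then have "m \<in> Sp" using m mpms unfolding Sp_def bnd by auto
        then have "m \<le> mp" unfolding mp_eq by (rule Max_ge[OF finSp])
        then show False using m by simp
      qed
      then show "5 * L * rr * K0 < real m \<and> ms < m" using m mpms by auto
    qed
    define c2 where "c2 = (\<lambda>j. w j / (4*eps))"
    define B2 where "B2 = (\<lambda>m Y. exp (- 3*C*(real m - real ms)/4) * (\<Prod>j\<in>{ms<..m}. exp (c2 j * (Y j - bb j)^2)))"
    have part: "(\<integral>Y. (\<Sum>m\<in>{mp<..G}. post lam eps eta t C Y m) \<partial>data_law lam eps theta) \<le> (\<Sum>m\<in>{mp<..G}. \<beta>)"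
    proof (rule expect_bound[where B = B2])
      show "finite {mp<..G}" by simp
      show "\<And>Y. 0 \<le> (\<Sum>m\<in>{mp<..G}. post lam eps eta t C Y m)" by (intro sum_nonneg post_nn)
      show "\<And>m Y. 0 \<le> B2 m Y" by (simp add: B2_def prod_nonneg)
      show "\<And>m. m \<in> {mp<..G} \<Longrightarrow> B2 m \<in> borel_measurable (data_law lam eps theta)"
        unfolding B2_def by (rule B_meas)
      show "\<And>m. 0 \<le> \<beta>" by (rule \<beta>nn)
      show "\<And>Y. (\<Sum>m\<in>{mp<..G}. post lam eps eta t C Y m) \<le> (\<Sum>m\<in>{mp<..G}. B2 m Y)"
      proof (intro sum_mono)
        fix Y m assume m: "m \<in> {mp<..G}"
        have m1: "ms < m" "m \<le> G" using m big by auto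
        have "post lam eps eta t C Y m \<le> exp (- 3*C*(real m - real ms)/4) * (\<Prod>j\<in>{ms<..m}. exp ((w j * (Y j - bb j)^2 / eps)/4))"
          unfolding postq by (rule post_upper[OF Nq ms1 m1])
        also have "\<dots> = B2 m Y" unfolding B2_def c2_def
          by (intro arg_cong2[where f="(*)"] refl prod.cong) (auto simp: field_simps)
        finally show "post lam eps eta t C Y m \<le> B2 m Y" .
      qed
      show "\<And>m. m \<in> {mp<..G} \<Longrightarrow> (\<integral>\<^sup>+Y. ennreal (B2 m Y) \<partial>data_law lam eps theta) \<le> ennreal \<beta>"
      proof -
        fix m assume m: "m \<in> {mp<..G}"
        have m1: "ms < m" "m \<le> G" "5 * L * rr * K0 < real m" using m big by auto
        have jr: "\<And>j. j \<in> {ms<..m} \<Longrightarrow> 1 \<le> j \<and> ms < j" using ms1 by auto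
        have gb: "(\<integral>\<^sup>+Y. ennreal (B2 m Y) \<partial>data_law lam eps theta)
            \<le> ennreal (exp (- 3*C*(real m - real ms)/4) * (\<Prod>j\<in>{ms<..m}. exp (1/2 + nu j / 2)))"
          unfolding B2_def
        proof (rule gauss_prod_bound[OF eps(1)])
          show "finite {ms<..m}" by simp
          show "0 \<le> exp (- 3*C*(real m - real ms)/4)" by simp
          fix j assume j: "j \<in> {ms<..m}"
          have wj: "0 < w j" "w j \<le> 1" using wpos wle jr[OF j] by auto
          have e1: "1 - 2 * c2 j * eps = 1 - w j / 2" using eps by (simp add: c2_def)
          show "0 < 1 - 2 * c2 j * eps" unfolding e1 using wj by simp
          have e2: "c2 j * (lam j * theta j - bb j)^2 = w j * nu j / 4"
            using eps by (simp add: c2_def bb_def nu_def u_def power2_eq_square field_simps)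
          show "exp (c2 j * (lam j * theta j - bb j)^2 / (1 - 2 * c2 j * eps)) / sqrt (1 - 2 * c2 j * eps)
              \<le> exp (1/2 + nu j / 2)"
            unfolding e1 e2 by (rule gauss_val_upper[OF wj nunn])
        qed
        have signu: "(\<Sum>j\<in>{ms<..m}. nu j) \<le> C * rr * K0"
        proof -
          have h: "1 / (lam i0)^2 = LM" using i0 by (simp add: Lam_def)
          have li0: "(lam i0)^2 = 1 / LM" using h by (metis inverse_eq_divide inverse_inverse_eq)
          have each: "\<And>j. j \<in> {ms<..m} \<Longrightarrow> nu j \<le> C / (eps * LM) * u j"
          proof -
            fix j assume j: "j \<in> {ms<..m}"
            have "(lam j)^2 \<le> C * (lam i0)^2" using assE1 ms1 j i0(1) by auto
            then have "(lam j)^2 \<le> C / LM" using li0 by simp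
            then have "(lam j)^2 * u j \<le> C / LM * u j" by (intro mult_right_mono) (simp_all add: u_def)
            then show "nu j \<le> C / (eps * LM) * u j" using eps by (simp add: nu_def divide_right_mono field_simps)
          qed
          have "(\<Sum>j\<in>{ms<..m}. nu j) \<le> (\<Sum>j\<in>{ms<..m}. C / (eps * LM) * u j)"
            by (rule sum_mono) (rule each)
          also have "\<dots> = C / (eps * LM) * (\<Sum>j\<in>{ms<..m}. u j)" by (simp add: sum_distrib_left)
          also have "(\<Sum>j\<in>{ms<..m}. u j) \<le> rr * Ps"
          proof -
            have "b ms = (\<Sum>j\<in>{ms<..m}. u j) + b m" using bf(2)[of ms m] m1 by (simp add: b_def u_def)
            moreover have "0 \<le> b m" using bf(1) by (simp add: b_def)
            ultimately show ?thesis using bms by simp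
          qed
          then have "C / (eps * LM) * (\<Sum>j\<in>{ms<..m}. u j) \<le> C / (eps * LM) * (rr * Ps)"
            using C_ge eps LMpos by (intro mult_left_mono) auto
          also have "\<dots> = C * rr * K0" by (simp add: K0_def)
          finally show ?thesis .
        qed
        have "exp (- 3*C*(real m - real ms)/4) * (\<Prod>j\<in>{ms<..m}. exp (1/2 + nu j / 2))
            = exp (- 3*C*(real m - real ms)/4 + ((real m - real ms)/2 + (\<Sum>j\<in>{ms<..m}. nu j)/2))"
        proof -
          have s: "(\<Sum>j\<in>{ms<..m}. 1/2 + nu j / 2) = (real m - real ms)/2 + (\<Sum>j\<in>{ms<..m}. nu j)/2"
            using m1 by (simp add: sum.distrib sum_divide_distrib of_nat_diff)
          have "(\<Prod>j\<in>{ms<..m}. exp (1/2 + nu j / 2)) = exp ((real m - real ms)/2 + (\<Sum>j\<in>{ms<..m}. nu j)/2)"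
            unfolding s[symmetric] by (simp add: exp_sum)
          then show ?thesis by (simp add: exp_add[symmetric])
        qed
        also have "\<dots> \<le> \<beta>"
        proof -
          define V where "V = C * L * rr * K0"
          define W where "W = C * rr * K0"
          define X where "X = C * rr * real ms"
          define Cm where "Cm = C * real m"
          define Cms where "Cms = C * real ms"
          define Sn where "Sn = (\<Sum>j\<in>{ms<..m}. nu j)"
          have SW: "Sn \<le> W" using signu by (simp add: Sn_def W_def)
          have W0: "0 \<le> W" using C_ge rr1 K0pos by (simp add: W_def)
          have WV: "W \<le> V"
          proof -
            have "W * 1 \<le> W * L" using W0 L_ge by (intro mult_left_mono) auto
            then show ?thesis by (simp add: W_def V_def algebra_simps)
          qed
          have CmV: "5 * V \<le> Cm"
          proof -
            have "C * (5 * L * rr * K0) \<le> C * real m" using m1 C_ge by (intro mult_left_mono) auto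
            then show ?thesis by (simp add: V_def Cm_def algebra_simps)
          qed
          have CmsV: "Cms \<le> V"
          proof -
            have "L * K0 \<le> L * rr * K0"
            proof -
              have "(L * K0) * 1 \<le> (L * K0) * rr" using rr1 L_ge K0pos by (intro mult_left_mono) auto
              then show ?thesis by (simp add: algebra_simps)
            qed
            then have "C * real ms \<le> C * (L * rr * K0)" using msK0 C_ge by (intro mult_left_mono) auto
            then show ?thesis by (simp add: V_def Cms_def algebra_simps)
          qed
          have XV: "X \<le> V"
          proof -
            have "C * rr * real ms \<le> C * rr * (L * K0)" using msK0 C_ge rr1 by (intro mult_left_mono) auto
            then show ?thesis by (simp add: V_def X_def algebra_simps)
          qed
          have X0: "0 \<le> X" using C_ge rr1 by (simp add: X_def)
          have nC: "real m - real ms \<le> Cm - Cms"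
          proof -
            have "(real m - real ms) * 1 \<le> (real m - real ms) * C" using m1 C_ge by (intro mult_left_mono) auto
            then show ?thesis by (simp add: Cm_def Cms_def algebra_simps)
          qed
          have e1: "- 3*C*(real m - real ms)/4 = - 3*Cm/4 + 3*Cms/4"
            by (simp add: Cm_def Cms_def right_diff_distrib diff_divide_distrib)
          have e2: "- (C * rr / 5) * real ms = - X/5" by (simp add: X_def)
          have gen: "\<And>a. a \<le> Cm - Cms \<Longrightarrow> - 3*Cm/4 + 3*Cms/4 + (a/2 + Sn/2) \<le> - X/5"
            using SW W0 WV CmV CmsV XV X0 by linarith
          have "- 3*Cm/4 + 3*Cms/4 + ((real m - real ms)/2 + Sn/2) \<le> - X/5"
            by (rule gen[OF nC])
          then have "- 3*C*(real m - real ms)/4 + ((real m - real ms)/2 + (\<Sum>j\<in>{ms<..m}. nu j)/2) \<le> - (C * rr / 5) * real ms"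
            unfolding e1 e2 Sn_def .
          then show ?thesis by (simp add: \<beta>_def)
        qed
        finally show "(\<integral>\<^sup>+Y. ennreal (B2 m Y) \<partial>data_law lam eps theta) \<le> ennreal \<beta>"
          using gb by (meson ennreal_leI order_trans)
      qed
    qed
    have cardII: "card {mp<..G} \<le> G" by simp
    show ?thesis using part final[OF _ cardII] by (simp add: mp_def)
  qed
  show "(\<integral>Y. (\<Sum>m\<in>{1..<m_minus a lam eps theta eta C L d r}. post lam eps eta (tau eps) C Y m)
                 \<partial>data_law lam eps theta)
               \<le> 2 * exp (- (C * max 1 r / 5) * real (m_star a lam eps) + ln (real (G_eps lam eps)))
           \<and> (\<integral>Y. (\<Sum>m\<in>{m_plus a lam eps L r<..G_eps lam eps}. post lam eps eta (tau eps) C Y m)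
                 \<partial>data_law lam eps theta)
               \<le> 2 * exp (- (C * max 1 r / 5) * real (m_star a lam eps) + ln (real (G_eps lam eps)))"
    using resI resII by (simp add: mm_def t_def rr_def ms_def G_def)
qed

end
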